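(* Let $d\ge 2$. (a) Let $X_1,\dots,X_M$ with $M>d^2-1$ be an overcomplete frame (spanning set) of $\mathfrak{su}(d)$ and let $W(\vec\theta)=\exp\big(\sum_{j=1}^M\theta_jX_j\big)$ for $\vec\theta\in\mathbb{R}^M$. Then $W$ is not locally surjective, i.e. it has singular points: there exist $\vec\theta$ at which $\mathrm{span}\{W^\dagger(\vec\theta)\partial_{\theta_j}W(\vec\theta)\mid j=1,\dots,M\}\ne\mathfrak{su}(d)$. (b) Let $X_1,\dots,X_{d^2-1}$ be a basis of $\mathfrak{su}(d)$, let $X(\vec\theta)=\sum_{j=1}^{d^2-1}\theta_jX_j$, and for $\vec\theta,\vec\varphi\in\mathbb{R}^{d^2-1}$ let $V(\vec\theta,\vec\varphi)=\exp(X(\vec\theta))\exp(X(\vec\varphi))$. If $\vec\varphi_s$ is a singular point of $\vec\varphi\mapsto\exp(X(\vec\varphi))$, then $(\vec\varphi_s,\vec\varphi_s)$ is a singular point of $V$.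
   Context: $\mathfrak{su}(d)$ is the real Lie algebra of traceless skew-Hermitian $d\times d$ matrices. For a smooth parameterization $U:\mathbb{R}^M\to\mathrm{SU}(d)$, set $\Omega_j(\vec\theta)=U^\dagger(\vec\theta)\frac{\partial}{\partial\theta_j}U(\vec\theta)\in\mathfrak{su}(d)$; a point $\vec\theta$ is a singular point of $U$ if $\mathrm{span}_{\mathbb{R}}\{\Omega_j(\vec\theta)\mid j=1,\dots,M\}\neq\mathfrak{su}(d)$, and $U$ is locally surjective if it has no singular points. *)

theory Defs
  imports "HOL-Analysis.Analysis"
begin

text \<open>d x d complex matrices are modelled as complex^'n^'n with d = CARD('n).
  Matrix product is (**), identity is mat 1.\<close>

fun matpow :: "complex^'n^'n \<Rightarrow> nat \<Rightarrow> complex^'n^'n" where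
  "matpow A 0 = mat 1"
| "matpow A (Suc k) = A ** matpow A k"

definition mexp :: "complex^'n^'n \<Rightarrow> complex^'n^'n" where
  "mexp A = (\<Sum>k. (1 / fact k :: real) *\<^sub>R matpow A k)"

definition dagger :: "complex^'n^'n \<Rightarrow> complex^'n^'n" where
  "dagger A = (\<chi> i j. cnj (A $ j $ i))"

definition mtrace :: "complex^'n^'n \<Rightarrow> complex" where
  "mtrace A = (\<Sum>i\<in>UNIV. A $ i $ i)"

definition su :: "(complex^'n^'n) set" where
  "su = {A. dagger A = - A \<and> mtrace A = 0}"

definition pderiv_param ::
  "(real^'p \<Rightarrow> complex^'n^'n) \<Rightarrow> real^'p \<Rightarrow> 'p \<Rightarrow> complex^'n^'n" where
  "pderiv_param U \<theta> j = vector_derivative (\<lambda>t. U (\<theta> + t *\<^sub>R axis j 1)) (at 0)"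

definition Omega ::
  "(real^'p \<Rightarrow> complex^'n^'n) \<Rightarrow> real^'p \<Rightarrow> 'p \<Rightarrow> complex^'n^'n" where
  "Omega U \<theta> j = dagger (U \<theta>) ** pderiv_param U \<theta> j"

definition singular_point :: "(real^'p \<Rightarrow> complex^'n^'n) \<Rightarrow> real^'p \<Rightarrow> bool" where
  "singular_point U \<theta> \<longleftrightarrow> span (range (Omega U \<theta>)) \<noteq> su"

definition locally_surjective :: "(real^'p \<Rightarrow> complex^'n^'n) \<Rightarrow> bool" where
  "locally_surjective U \<longleftrightarrow> (\<forall>\<theta>. \<not> singular_point U \<theta>)"

definition lincomb :: "('p::finite \<Rightarrow> complex^'n^'n) \<Rightarrow> real^'p \<Rightarrow> complex^'n^'n" where
  "lincomb X \<theta> = (\<Sum>j\<in>UNIV. (\<theta> $ j) *\<^sub>R X j)"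

end

theory Submission
  imports Defs
begin


lemma mm_bilinear: "bilinear (\<lambda>(A::complex^'n^'n) B. A ** B)"
  unfolding bilinear_def
  by (auto intro!: linearI simp: matrix_add_ldistrib matrix_scalar_ac scalar_matrix_assoc
       vec_eq_iff matrix_matrix_mult_def distrib_right distrib_left sum.distrib scaleR_sum_right)

lemma mm_bb: "bounded_bilinear (\<lambda>(A::complex^'n^'n) B. A ** B)"
  using mm_bilinear bilinear_conv_bounded_bilinear by blast

lemma dagger_linear: "linear (dagger :: complex^'n^'n \<Rightarrow> _)"
  by (auto intro!: linearI simp: dagger_def vec_eq_iff)

lemma dagger_bl: "bounded_linear (dagger :: complex^'n^'n \<Rightarrow> _)"
  using dagger_linear linear_conv_bounded_linear by blast

lemma dagger_mult: "dagger (A ** B) = dagger B ** dagger (A::complex^'n^'n)"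
  by (simp add: dagger_def matrix_matrix_mult_def vec_eq_iff mult.commute)

lemma dagger_dagger[simp]: "dagger (dagger A) = (A::complex^'n^'n)"
  by (simp add: dagger_def vec_eq_iff)

lemma dagger_minus: "dagger (- A) = - dagger (A::complex^'n^'n)"
  by (simp add: dagger_def vec_eq_iff)

lemma dagger_one[simp]: "dagger (mat 1 :: complex^'n^'n) = mat 1"
  by (simp add: dagger_def vec_eq_iff mat_def)

lemma matpow_commute: "matpow A k ** A = A ** matpow A k"
  by (induction k) (simp_all add: matrix_mul_assoc[symmetric])

lemma dagger_matpow: "dagger (matpow A k) = matpow (dagger A) (k::nat)"
  by (induction k) (simp_all add: dagger_mult matpow_commute)


lemma mm_const: "\<exists>C\<ge>1. norm (mat 1 :: complex^'n^'n) \<le> C \<and>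
   (\<forall>(A::complex^'n^'n) (B::complex^'n^'n). norm (A ** B) \<le> C * norm A * norm B)"
proof -
  obtain K where K: "K \<ge> 0" "\<And>(A::complex^'n^'n) (B::complex^'n^'n). norm (A ** B) \<le> norm A * norm B * K"
    using bounded_bilinear.nonneg_bounded[OF mm_bb] by metis
  show ?thesis
  proof (intro exI[of _ "K + norm (mat 1 :: complex^'n^'n) + 1"] conjI allI)
    fix A B :: "complex^'n^'n"
    have "norm (A ** B) \<le> norm A * norm B * K" by (rule K(2))
    also have "\<dots> \<le> norm A * norm B * (K + norm (mat 1 :: complex^'n^'n) + 1)"
      by (intro mult_left_mono) auto
    finally show "norm (A ** B) \<le> (K + norm (mat 1 :: complex^'n^'n) + 1) * norm A * norm B"
      by (simp add: mult_ac)
  qed (use K in auto)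
qed

fun dpow :: "complex^'n^'n \<Rightarrow> complex^'n^'n \<Rightarrow> nat \<Rightarrow> complex^'n^'n" where
  "dpow M Y 0 = 0"
| "dpow M Y (Suc k) = Y ** matpow M k + M ** dpow M Y k"

definition dexp :: "complex^'n^'n \<Rightarrow> complex^'n^'n \<Rightarrow> complex^'n^'n" where
  "dexp M Y = (\<Sum>k. (1 / fact k :: real) *\<^sub>R dpow M Y k)"

lemma matpow_bound:
  fixes M :: "complex^'n^'n"
  assumes C: "C \<ge> 1" "norm (mat 1 :: complex^'n^'n) \<le> C"
    "\<And>(A::complex^'n^'n) (B::complex^'n^'n). norm (A ** B) \<le> C * norm A * norm B"
    and R: "norm M \<le> R"
  shows "norm (matpow M k) \<le> (C * (R + 1)) ^ (k + 1)"
proof (induction k)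
  case 0
  have "R \<ge> 0" using R norm_ge_zero order_trans by blast
  then have CC: "C \<le> C * (R + 1)" using C by simp
  show ?case using order_trans[OF C(2) CC] by simp
next
  case (Suc k)
  have R0: "R \<ge> 0" using R norm_ge_zero order_trans by blast
  have "norm (matpow M (Suc k)) \<le> C * norm M * norm (matpow M k)" using C(3) by simp
  also have "\<dots> \<le> C * (R + 1) * (C * (R + 1)) ^ (k + 1)"
    using Suc R C R0 by (intro mult_mono) auto
  finally show ?case by simp
qed

lemma dpow_bound:
  fixes M Y :: "complex^'n^'n"
  assumes C: "C \<ge> 1" "norm (mat 1 :: complex^'n^'n) \<le> C"
    "\<And>(A::complex^'n^'n) (B::complex^'n^'n). norm (A ** B) \<le> C * norm A * norm B"
    and R: "norm M \<le> R" "norm Y \<le> R"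
  shows "norm (dpow M Y k) \<le> real k * (C * (R + 1)) ^ (k + 1)"
proof (induction k)
  case 0
  then show ?case by simp
next
  case (Suc k)
  define K where "K = C * (R + 1)"
  have R0: "R \<ge> 0" using R norm_ge_zero order_trans by blast
  have K0: "K \<ge> 0" using R0 C by (simp add: K_def)
  have P: "norm (matpow M k) \<le> K ^ (k + 1)" using matpow_bound[OF C R(1)] K_def by simp
  have "norm (Y ** matpow M k) \<le> C * norm Y * norm (matpow M k)" by (rule C(3))
  also have "\<dots> \<le> C * (R + 1) * K ^ (k + 1)"
    using P R C R0 by (intro mult_mono) auto
  finally have 1: "norm (Y ** matpow M k) \<le> K ^ (k + 2)" by (simp add: K_def)
  have "norm (M ** dpow M Y k) \<le> C * norm M * norm (dpow M Y k)" by (rule C(3))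
  also have "\<dots> \<le> C * (R + 1) * (real k * K ^ (k + 1))"
    using Suc R C R0 K_def by (intro mult_mono) auto
  finally have 2: "norm (M ** dpow M Y k) \<le> real k * K ^ (k + 2)" by (simp add: K_def mult_ac)
  have "norm (dpow M Y (Suc k)) \<le> norm (Y ** matpow M k) + norm (M ** dpow M Y k)"
    by (simp add: norm_triangle_ineq)
  also have "\<dots> \<le> real (Suc k) * K ^ (Suc k + 1)" using 1 2 by (simp add: algebra_simps)
  finally show ?case by (simp add: K_def)
qed

lemma summable_K1: "summable (\<lambda>k. (K::real) ^ (k + 1) / fact k)"
proof -
  have "summable (\<lambda>k. K * (K ^ k /\<^sub>R fact k))"
    by (intro summable_mult summable_exp_generic)
  then show ?thesis by (simp add: divide_inverse mult_ac)
qed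

lemma summable_K2: assumes "K \<ge> 0" shows "summable (\<lambda>k. real k * (K::real) ^ (k + 1) / fact k)"
proof -
  have s: "summable (\<lambda>k. K * ((2 * K) ^ k /\<^sub>R fact k))"
    by (intro summable_mult summable_exp_generic)
  show ?thesis
  proof (rule summable_comparison_test'[OF s])
    fix k :: nat
    have "real k \<le> 2 ^ k" by (metis less_exp of_nat_le_iff of_nat_numeral of_nat_power less_imp_le)
    then have "real k * K ^ k \<le> 2 ^ k * K ^ k" using assms by (intro mult_right_mono) auto
    then have "real k * K ^ k / fact k \<le> 2 ^ k * K ^ k / fact k" by (rule divide_right_mono) auto
    then have "K * (real k * K ^ k / fact k) \<le> K * (2 ^ k * K ^ k / fact k)"
      by (rule mult_left_mono) (use assms in auto)
    moreover have "norm (real k * K ^ (k + 1) / fact k) = K * (real k * K ^ k / fact k)"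
      using assms by (simp add: abs_mult)
    moreover have "K * ((2 * K) ^ k /\<^sub>R fact k) = K * (2 ^ k * K ^ k / fact k)"
      by (simp add: power_mult_distrib divide_inverse mult_ac)
    ultimately show "norm (real k * K ^ (k + 1) / fact k) \<le> K * ((2 * K) ^ k /\<^sub>R fact k)"
      by simp
  qed
qed


lemma summable_mexp_series: "summable (\<lambda>k. (1 / fact k :: real) *\<^sub>R matpow (M::complex^'n^'n) k)"
proof -
  obtain C where C: "C \<ge> 1" "norm (mat 1 :: complex^'n^'n) \<le> C"
    "\<And>(A::complex^'n^'n) (B::complex^'n^'n). norm (A ** B) \<le> C * norm A * norm B"
    using mm_const by metis
  show ?thesis
  proof (rule summable_comparison_test'[OF summable_K1[of "C * (norm M + 1)"]])
    fix k :: nat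
    show "norm ((1 / fact k :: real) *\<^sub>R matpow M k) \<le> (C * (norm M + 1)) ^ (k + 1) / fact k"
      using matpow_bound[OF C order_refl, where k=k] by (simp add: divide_right_mono)
  qed
qed

lemma summable_dexp_series: "summable (\<lambda>k. (1 / fact k :: real) *\<^sub>R dpow (M::complex^'n^'n) Y k)"
proof -
  obtain C where C: "C \<ge> 1" "norm (mat 1 :: complex^'n^'n) \<le> C"
    "\<And>(A::complex^'n^'n) (B::complex^'n^'n). norm (A ** B) \<le> C * norm A * norm B"
    using mm_const by metis
  define R where "R = norm M + norm Y"
  have R: "norm M \<le> R" "norm Y \<le> R" by (auto simp: R_def)
  have K0: "C * (R + 1) \<ge> 0" using C R_def by simp
  show ?thesis
  proof (rule summable_comparison_test'[OF summable_K2[OF K0]])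
    fix k :: nat
    show "norm ((1 / fact k :: real) *\<^sub>R dpow M Y k) \<le> real k * (C * (R + 1)) ^ (k + 1) / fact k"
      using dpow_bound[OF C R, where k=k] by (simp add: divide_right_mono)
  qed
qed

lemma mm_scaleR_left: "(c *\<^sub>R A) ** B = c *\<^sub>R (A ** (B::complex^'n^'n))"
  by (simp add: scalar_matrix_assoc)

lemma mm_scaleR_right: "A ** (c *\<^sub>R B) = c *\<^sub>R (A ** (B::complex^'n^'n))"
  by (simp add: matrix_scalar_ac scalar_matrix_assoc)

lemma matpow_deriv:
  "((\<lambda>t. matpow (A + t *\<^sub>R Y) k) has_derivative (\<lambda>h. h *\<^sub>R dpow (A + t *\<^sub>R Y) Y k)) (at t within S)"
proof (induction k)
  case 0
  then show ?case by simp
next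
  case (Suc k)
  have l: "((\<lambda>t. A + t *\<^sub>R Y) has_derivative (\<lambda>h. h *\<^sub>R Y)) (at t within S)"
    by (auto intro!: derivative_eq_intros)
  have "((\<lambda>t. (A + t *\<^sub>R Y) ** matpow (A + t *\<^sub>R Y) k) has_derivative
     (\<lambda>h. (A + t *\<^sub>R Y) ** (h *\<^sub>R dpow (A + t *\<^sub>R Y) Y k) + (h *\<^sub>R Y) ** matpow (A + t *\<^sub>R Y) k))
     (at t within S)"
    using bounded_bilinear.FDERIV[OF mm_bb l Suc] by simp
  moreover have "(\<lambda>h. (A + t *\<^sub>R Y) ** (h *\<^sub>R dpow (A + t *\<^sub>R Y) Y k) + (h *\<^sub>R Y) ** matpow (A + t *\<^sub>R Y) k)
     = (\<lambda>h. h *\<^sub>R dpow (A + t *\<^sub>R Y) Y (Suc k))"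
    by (auto simp: fun_eq_iff mm_scaleR_left mm_scaleR_right scaleR_add_right add.commute)
  ultimately show ?case by simp
qed

lemma mexp_line_deriv:
  fixes A Y :: "complex^'n^'n"
  shows "((\<lambda>t. mexp (A + t *\<^sub>R Y)) has_derivative (\<lambda>h. h *\<^sub>R dexp (A + t *\<^sub>R Y) Y)) (at t)"
proof -
  obtain C where C: "C \<ge> 1" "norm (mat 1 :: complex^'n^'n) \<le> C"
    "\<And>(A::complex^'n^'n) (B::complex^'n^'n). norm (A ** B) \<le> C * norm A * norm B"
    using mm_const by metis
  define S where "S = ball t 1"
  define R where "R = norm A + (\<bar>t\<bar> + 1) * norm Y"
  define K where "K = C * (R + 1)"
  have K0: "K \<ge> 0" using C by (simp add: K_def R_def)
  have RY: "norm Y \<le> R" by (simp add: R_def distrib_right)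
  have RM: "norm (A + x *\<^sub>R Y) \<le> R" if "x \<in> S" for x
  proof -
    have "\<bar>x\<bar> \<le> \<bar>t\<bar> + 1" using that by (auto simp: S_def dist_real_def)
    then have "\<bar>x\<bar> * norm Y \<le> (\<bar>t\<bar> + 1) * norm Y" by (intro mult_right_mono) auto
    then show ?thesis using norm_triangle_ineq[of A "x *\<^sub>R Y"] by (simp add: R_def)
  qed
  define f where "f = (\<lambda>k x. (1 / fact k :: real) *\<^sub>R matpow (A + x *\<^sub>R Y) k)"
  define g where "g = (\<lambda>k x. (1 / fact k :: real) *\<^sub>R dpow (A + x *\<^sub>R Y) Y k)"
  have ul: "uniform_limit S (\<lambda>n x. \<Sum>i<n. g i x) (\<lambda>x. suminf (\<lambda>i. g i x)) sequentially"
  proof (rule Weierstrass_m_test[OF _ summable_K2[OF K0]])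
    fix n x assume "x \<in> S"
    show "norm (g n x) \<le> real n * K ^ (n + 1) / fact n"
      using dpow_bound[OF C RM[OF \<open>x \<in> S\<close>] RY, where k=n] by (simp add: g_def K_def divide_right_mono)
  qed
  have "\<exists>G. \<forall>x\<in>S. (\<lambda>n. f n x) sums (G x) \<and>
     (G has_derivative (\<lambda>h. h *\<^sub>R suminf (\<lambda>i. g i x))) (at x within S)"
  proof (rule has_derivative_series[where f' = "\<lambda>n x h. h *\<^sub>R g n x"])
    show "convex S" by (simp add: S_def)
    show "((f n) has_derivative (\<lambda>h. h *\<^sub>R g n x)) (at x within S)" for n x
      unfolding f_def g_def
      by (rule has_derivative_eq_rhs, rule has_derivative_scaleR_right[OF matpow_deriv])
        (auto simp: fun_eq_iff)
    show "\<forall>\<^sub>F n in sequentially. \<forall>x\<in>S. \<forall>h. norm ((\<Sum>i<n. h *\<^sub>R g i x) - h *\<^sub>R suminf (\<lambda>i. g i x))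
        \<le> e * norm h" if "e > 0" for e
    proof -
      have "\<forall>\<^sub>F n in sequentially. \<forall>x\<in>S. dist (\<Sum>i<n. g i x) (suminf (\<lambda>i. g i x)) < e"
        using ul \<open>e > 0\<close> unfolding uniform_limit_iff by blast
      then show ?thesis
      proof (rule eventually_mono)
        fix n assume H: "\<forall>x\<in>S. dist (\<Sum>i<n. g i x) (suminf (\<lambda>i. g i x)) < e"
        show "\<forall>x\<in>S. \<forall>h. norm ((\<Sum>i<n. h *\<^sub>R g i x) - h *\<^sub>R suminf (\<lambda>i. g i x)) \<le> e * norm h"
        proof (intro ballI allI)
          fix x h assume "x \<in> S"
          have "norm ((\<Sum>i<n. h *\<^sub>R g i x) - h *\<^sub>R suminf (\<lambda>i. g i x))
              = \<bar>h\<bar> * dist (\<Sum>i<n. g i x) (suminf (\<lambda>i. g i x))"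
            by (simp add: dist_norm flip: scaleR_sum_right scaleR_diff_right)
          also have "\<dots> \<le> \<bar>h\<bar> * e" using H \<open>x \<in> S\<close> by (intro mult_left_mono) auto
          finally show "norm ((\<Sum>i<n. h *\<^sub>R g i x) - h *\<^sub>R suminf (\<lambda>i. g i x)) \<le> e * norm h"
            by (simp add: mult_ac)
        qed
      qed
    qed
    show "t \<in> S" by (simp add: S_def)
    show "(\<lambda>n. f n t) sums (mexp (A + t *\<^sub>R Y))"
      unfolding f_def mexp_def by (rule summable_sums[OF summable_mexp_series])
  qed
  then obtain G where G: "\<And>x. x \<in> S \<Longrightarrow> (\<lambda>n. f n x) sums (G x)"
    "\<And>x. x \<in> S \<Longrightarrow> (G has_derivative (\<lambda>h. h *\<^sub>R suminf (\<lambda>i. g i x))) (at x within S)"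
    by blast
  have eq: "G x = mexp (A + x *\<^sub>R Y)" if "x \<in> S" for x
    using G(1)[OF that] summable_sums[OF summable_mexp_series] unfolding f_def mexp_def
    using sums_unique2 by blast
  have "(G has_derivative (\<lambda>h. h *\<^sub>R suminf (\<lambda>i. g i t))) (at t)"
    using G(2)[of t] by (simp add: S_def at_within_open[of t "ball t 1"])
  then have "((\<lambda>t. mexp (A + t *\<^sub>R Y)) has_derivative (\<lambda>h. h *\<^sub>R suminf (\<lambda>i. g i t))) (at t)"
    by (rule has_derivative_transform_within_open[where s = S]) (auto simp: S_def eq)
  then show ?thesis by (simp add: g_def dexp_def)
qed


lemma bl_left: "bounded_linear (\<lambda>X. (P::complex^'n^'n) ** (X::complex^'n^'n))"
  using bounded_bilinear.bounded_linear_right[OF mm_bb, of P] by simp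

lemma bl_right: "bounded_linear (\<lambda>X. (X::complex^'n^'n) ** (Q::complex^'n^'n))"
  using bounded_bilinear.bounded_linear_left[OF mm_bb, of Q] by simp

lemma bl_both: "bounded_linear (\<lambda>X. (P::complex^'n^'n) ** (X::complex^'n^'n) ** (Q::complex^'n^'n))"
  using bounded_linear_compose[OF bl_right[of Q] bl_left[of P]] by (simp add: o_def)

lemma mexp_zero: "mexp (0::complex^'n^'n) = mat 1"
proof -
  have "(\<lambda>k. (1 / fact k :: real) *\<^sub>R matpow (0::complex^'n^'n) k) =
        (\<lambda>k. if k = 0 then mat 1 else 0)"
    by (auto simp: fun_eq_iff gr0_conv_Suc)
  then show ?thesis
    unfolding mexp_def using sums_single[of 0 "\<lambda>_. mat 1 :: complex^'n^'n"]
    by (simp add: sums_iff)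
qed

lemma matpow_comm: "B ** M = M ** B \<Longrightarrow> B ** matpow M k = matpow M k ** (B::complex^'n^'n)"
proof (induction k)
  case (Suc k)
  then show ?case by (simp add: matrix_mul_assoc) (metis matrix_mul_assoc)
qed simp

lemma mexp_comm:
  assumes "B ** M = M ** (B::complex^'n^'n)"
  shows "B ** mexp M = mexp M ** B"
proof -
  have "B ** mexp M = (\<Sum>k. B ** ((1 / fact k :: real) *\<^sub>R matpow M k))"
    unfolding mexp_def by (rule bounded_linear.suminf[OF bl_left summable_mexp_series])
  also have "\<dots> = (\<Sum>k. ((1 / fact k :: real) *\<^sub>R matpow M k) ** B)"
    using matpow_comm[OF assms] by (simp add: mm_scaleR_left mm_scaleR_right)
  also have "\<dots> = mexp M ** B"
    unfolding mexp_def by (rule bounded_linear.suminf[OF bl_right summable_mexp_series, symmetric])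
  finally show ?thesis .
qed

lemma dagger_scaleR: "dagger (c *\<^sub>R A) = c *\<^sub>R dagger (A::complex^'n^'n)"
  by (simp add: dagger_def vec_eq_iff)

lemma dagger_mexp: "dagger (mexp A) = mexp (dagger (A::complex^'n^'n))"
  unfolding mexp_def
  by (simp add: bounded_linear.suminf[OF dagger_bl summable_mexp_series] dagger_scaleR dagger_matpow)

lemma dpow_comm:
  assumes "Y ** M = M ** (Y::complex^'n^'n)"
  shows "dpow M Y (Suc k) = of_nat (Suc k) *\<^sub>R (Y ** matpow M k)"
proof (induction k)
  case 0
  then show ?case by simp
next
  case (Suc k)
  have e: "M ** (Y ** matpow M k) = Y ** matpow M (Suc k)"
    by (simp add: matrix_mul_assoc assms)
  have "dpow M Y (Suc (Suc k)) = Y ** matpow M (Suc k) + M ** dpow M Y (Suc k)"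
    by (simp only: dpow.simps)
  also have "\<dots> = Y ** matpow M (Suc k) + of_nat (Suc k) *\<^sub>R (Y ** matpow M (Suc k))"
    by (simp only: Suc mm_scaleR_right e)
  also have "\<dots> = of_nat (Suc (Suc k)) *\<^sub>R (Y ** matpow M (Suc k))"
    by (simp only: of_nat_Suc[of "Suc k"] scaleR_add_left scaleR_one add.commute)
  finally show ?case .
qed

lemma dexp_comm:
  assumes "Y ** M = M ** (Y::complex^'n^'n)"
  shows "dexp M Y = Y ** mexp M"
proof -
  have "dexp M Y = (\<Sum>k. (1 / fact (Suc k) :: real) *\<^sub>R dpow M Y (Suc k))"
    unfolding dexp_def using suminf_split_head[OF summable_dexp_series, of M Y] by simp
  also have "\<dots> = (\<Sum>k. Y ** ((1 / fact k :: real) *\<^sub>R matpow M k))"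
  proof (rule arg_cong[where f = suminf], rule ext)
    fix k
    have "(1 / fact (Suc k) :: real) *\<^sub>R dpow M Y (Suc k)
       = ((1 / fact (Suc k)) * of_nat (Suc k)) *\<^sub>R (Y ** matpow M k)"
      by (simp only: dpow_comm[OF assms] scaleR_scaleR)
    also have "(1 / fact (Suc k)) * of_nat (Suc k) = (1 / fact k :: real)"
      by (simp add: fact_Suc del: of_nat_Suc)
    finally show "(1 / fact (Suc k) :: real) *\<^sub>R dpow M Y (Suc k) = Y ** ((1 / fact k :: real) *\<^sub>R matpow M k)"
      by (simp add: mm_scaleR_right)
  qed
  also have "\<dots> = Y ** mexp M"
    unfolding mexp_def by (rule bounded_linear.suminf[OF bl_left summable_mexp_series, symmetric])
  finally show ?thesis .
qed


lemma mm_neg_left: "(- A) ** B = - (A ** (B::complex^'n^'n))"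
  by (simp add: matrix_matrix_mult_def vec_eq_iff sum_negf)

lemma mm_neg_right: "A ** (- B) = - (A ** (B::complex^'n^'n))"
  by (simp add: matrix_matrix_mult_def vec_eq_iff sum_negf)

lemma mexp_scale_deriv:
  fixes A :: "complex^'n^'n"
  shows "((\<lambda>s. mexp (s *\<^sub>R A)) has_derivative (\<lambda>h. h *\<^sub>R (A ** mexp (s *\<^sub>R A)))) (at s)"
proof -
  have c: "A ** (s *\<^sub>R A) = (s *\<^sub>R A) ** A" by (simp add: mm_scaleR_left mm_scaleR_right)
  show ?thesis using mexp_line_deriv[of 0 A s] dexp_comm[OF c] by simp
qed

lemma mexp_inv: "mexp (- A) ** mexp A = (mat 1::complex^'n^'n)"
proof -
  define g where "g = (\<lambda>s::real. mexp (s *\<^sub>R (- A)) ** mexp (s *\<^sub>R A))"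
  have "\<exists>c. \<forall>x\<in>UNIV. g x = c"
  proof (rule has_derivative_zero_constant)
    fix s :: real
    let ?P = "mexp (s *\<^sub>R (- A))" and ?Q = "mexp (s *\<^sub>R A)"
    have PA: "A ** ?P = ?P ** A"
      by (rule mexp_comm) (simp add: mm_scaleR_left mm_scaleR_right mm_neg_left mm_neg_right)
    have "(g has_derivative (\<lambda>h. ?P ** (h *\<^sub>R (A ** ?Q)) + (h *\<^sub>R ((- A) ** ?P)) ** ?Q)) (at s)"
      unfolding g_def by (rule bounded_bilinear.FDERIV[OF mm_bb mexp_scale_deriv mexp_scale_deriv])
    moreover have "(\<lambda>h. ?P ** (h *\<^sub>R (A ** ?Q)) + (h *\<^sub>R ((- A) ** ?P)) ** ?Q) = (\<lambda>h. 0)"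
      using PA by (auto simp: fun_eq_iff mm_scaleR_left mm_scaleR_right mm_neg_left matrix_mul_assoc)
    ultimately show "(g has_derivative (\<lambda>h. 0)) (at s within UNIV)" by simp
  qed simp
  then obtain c where "\<And>x. g x = c" by blast
  then have "g 1 = g 0" by simp
  then show ?thesis by (simp add: g_def mexp_zero)
qed

lemma unitary_mexp:
  assumes "dagger A = - (A::complex^'n^'n)"
  shows "dagger (mexp A) ** mexp A = mat 1" "mexp A ** dagger (mexp A) = mat 1"
  using mexp_inv[of A] mexp_inv[of "-A"] by (simp_all add: dagger_mexp assms)


lemma mm_add_left: "(A + B) ** C = A ** C + B ** (C::complex^'n^'n)"
  by (simp add: matrix_matrix_mult_def vec_eq_iff distrib_right sum.distrib)

lemma dpow_conj:
  assumes "P ** M = M ** P" "Q ** M = M ** (Q::complex^'n^'n)"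
  shows "P ** dpow M Y k ** Q = dpow M (P ** Y ** Q) k"
proof (induction k)
  case (Suc k)
  have "P ** dpow M Y (Suc k) ** Q = P ** Y ** (matpow M k ** Q) + M ** (P ** dpow M Y k ** Q)"
    by (simp add: matrix_add_ldistrib mm_add_left matrix_mul_assoc assms(1))
  also have "\<dots> = dpow M (P ** Y ** Q) (Suc k)"
    using matpow_comm[OF assms(2), of k] Suc by (simp add: matrix_mul_assoc) (metis matrix_mul_assoc)
  finally show ?case .
qed simp

lemma dexp_conj:
  assumes "P ** M = M ** P" "Q ** M = M ** (Q::complex^'n^'n)"
  shows "P ** dexp M Y ** Q = dexp M (P ** Y ** Q)"
proof -
  have "P ** dexp M Y ** Q = (\<Sum>k. P ** ((1 / fact k :: real) *\<^sub>R dpow M Y k) ** Q)"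
    unfolding dexp_def by (rule bounded_linear.suminf[OF bl_both summable_dexp_series])
  also have "\<dots> = dexp M (P ** Y ** Q)"
    unfolding dexp_def by (simp add: mm_scaleR_left mm_scaleR_right dpow_conj[OF assms])
  finally show ?thesis .
qed

lemma dpow_add: "dpow M (Y1 + Y2) k = dpow M Y1 k + dpow M (Y2::complex^'n^'n) k"
  by (induction k) (simp_all add: matrix_add_ldistrib mm_add_left algebra_simps)

lemma dpow_scale: "dpow M (c *\<^sub>R Y) k = c *\<^sub>R dpow M (Y::complex^'n^'n) k"
  by (induction k) (simp_all add: mm_scaleR_left mm_scaleR_right scaleR_add_right)

lemma dexp_linear: "linear (dexp (M::complex^'n^'n))"
proof (rule linearI)
  fix Y1 Y2 :: "complex^'n^'n"
  show "dexp M (Y1 + Y2) = dexp M Y1 + dexp M Y2"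
    unfolding dexp_def dpow_add scaleR_add_right
    by (rule suminf_add[OF summable_dexp_series summable_dexp_series, symmetric])
next
  fix c :: real and Y :: "complex^'n^'n"
  show "dexp M (c *\<^sub>R Y) = c *\<^sub>R dexp M Y"
    unfolding dexp_def dpow_scale scaleR_scaleR
    using suminf_scaleR_right[OF summable_dexp_series, of c M Y]
    by (simp add: scaleR_scaleR mult.commute)
qed

lemma lincomb_axis:
  "lincomb X (\<theta> + t *\<^sub>R axis j 1) = lincomb X \<theta> + t *\<^sub>R X j"
proof -
  have "(\<Sum>i\<in>UNIV. (t * axis j 1 $ i) *\<^sub>R X i) = (\<Sum>i\<in>UNIV. if i = j then t *\<^sub>R X j else 0)"
    by (intro sum.cong) (auto simp: axis_def)
  also have "\<dots> = t *\<^sub>R X j" by simp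
  finally show ?thesis
    unfolding lincomb_def by (simp add: scaleR_add_left sum.distrib)
qed

lemma lincomb_in_span: "lincomb X \<theta> \<in> span (range X)"
  unfolding lincomb_def by (intro span_sum span_scale span_base) auto

lemma span_sub_lincomb: "span (range X) \<subseteq> range (lincomb (X::'p::finite \<Rightarrow> complex^'n^'n))"
proof (rule span_minimal)
  show "range X \<subseteq> range (lincomb X)"
  proof
    fix Z assume "Z \<in> range X"
    then obtain j where "Z = X j" by auto
    then have "Z = lincomb X (0 + 1 *\<^sub>R axis j 1)" by (simp only: lincomb_axis) (simp add: lincomb_def)
    then show "Z \<in> range (lincomb X)" by blast
  qed
  show "subspace (range (lincomb X))"
    unfolding subspace_def
  proof (intro conjI ballI allI)
    show "0 \<in> range (lincomb X)" by (rule range_eqI[of _ _ 0]) (simp add: lincomb_def)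
    fix x y assume "x \<in> range (lincomb X)" "y \<in> range (lincomb X)"
    then obtain a b where "x = lincomb X a" "y = lincomb X b" by auto
    then show "x + y \<in> range (lincomb X)"
      by (intro range_eqI[of _ _ "a + b"]) (simp add: lincomb_def scaleR_add_left sum.distrib)
  next
    fix c :: real and x assume "x \<in> range (lincomb X)"
    then obtain a where "x = lincomb X a" by auto
    then show "c *\<^sub>R x \<in> range (lincomb X)"
      by (intro range_eqI[of _ _ "c *\<^sub>R a"]) (simp add: lincomb_def scaleR_sum_right)
  qed
qed

lemma pderiv_lincomb:
  "pderiv_param (\<lambda>\<theta>. mexp (lincomb X \<theta>)) \<theta> j = dexp (lincomb X \<theta>) (X j)"
proof -
  have "((\<lambda>t. mexp (lincomb X \<theta> + t *\<^sub>R X j)) has_vector_derivative dexp (lincomb X \<theta>) (X j)) (at 0)"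
    using mexp_line_deriv[of "lincomb X \<theta>" "X j" 0] by (simp add: has_vector_derivative_def)
  then show ?thesis unfolding pderiv_param_def lincomb_axis by (rule vector_derivative_at)
qed


lemma mtrace_comm: "mtrace (A ** B) = mtrace (B ** (A::complex^'n^'n))"
  unfolding mtrace_def matrix_matrix_mult_def
  by (simp, subst sum.swap, simp add: mult.commute)

lemma has_vd_right:
  fixes E :: "complex^'n^'n"
  shows "((\<lambda>t. mexp (A + t *\<^sub>R Y) ** E) has_vector_derivative (dexp A Y ** E)) (at 0)"
proof -
  have "((\<lambda>t. mexp (A + t *\<^sub>R Y) ** E) has_derivative
      (\<lambda>h. mexp (A + 0 *\<^sub>R Y) ** 0 + (h *\<^sub>R dexp (A + 0 *\<^sub>R Y) Y) ** E)) (at 0)"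
    by (rule bounded_bilinear.FDERIV[OF mm_bb mexp_line_deriv has_derivative_const])
  then show ?thesis by (simp add: has_vector_derivative_def mm_scaleR_left)
qed

lemma has_vd_left:
  fixes E :: "complex^'n^'n"
  shows "((\<lambda>t. E ** mexp (A + t *\<^sub>R Y)) has_vector_derivative (E ** dexp A Y)) (at 0)"
proof -
  have "((\<lambda>t. E ** mexp (A + t *\<^sub>R Y)) has_derivative
      (\<lambda>h. E ** (h *\<^sub>R dexp (A + 0 *\<^sub>R Y) Y) + 0 ** mexp (A + 0 *\<^sub>R Y))) (at 0)"
    by (rule bounded_bilinear.FDERIV[OF mm_bb has_derivative_const mexp_line_deriv])
  then show ?thesis by (simp add: has_vector_derivative_def mm_scaleR_right)
qed

lemma part_b:
  fixes Y :: "'k::finite \<Rightarrow> complex^'n^'n"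
  assumes span: "span (range Y) = su"
    and sing: "singular_point (\<lambda>\<phi>. mexp (lincomb Y \<phi>)) \<phi>s"
  shows "singular_point
          (\<lambda>v::real^('k + 'k). mexp (lincomb Y (\<chi> i. v $ Inl i)) ** mexp (lincomb Y (\<chi> i. v $ Inr i)))
          (\<chi> i. case i of Inl a \<Rightarrow> \<phi>s $ a | Inr a \<Rightarrow> \<phi>s $ a)"
proof -
  define A where "A = lincomb Y \<phi>s"
  define E where "E = mexp A"
  define dE where "dE = dagger E"
  define V where "V = (\<lambda>v::real^('k + 'k). mexp (lincomb Y (\<chi> i. v $ Inl i)) ** mexp (lincomb Y (\<chi> i. v $ Inr i)))"
  define v0 where "v0 = (\<chi> i. case i of Inl a \<Rightarrow> \<phi>s $ a | Inr a \<Rightarrow> (\<phi>s $ a :: real))"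
  define \<Omega> where "\<Omega> = Omega (\<lambda>\<phi>. mexp (lincomb Y \<phi>)) \<phi>s"
  have Asu: "A \<in> su" using lincomb_in_span[of Y \<phi>s] span by (simp add: A_def)
  then have dA: "dagger A = - A" by (simp add: su_def)
  have dEE: "dE ** E = mat 1" and EdE: "E ** dE = mat 1"
    using unitary_mexp[OF dA] by (simp_all add: dE_def E_def)
  have dEexp: "dE = mexp (- A)" by (simp add: dE_def E_def dagger_mexp dA)
  have cE: "E ** A = A ** E" using mexp_comm[of A A] by (simp add: E_def)
  have cdE: "dE ** A = A ** dE"
    using mexp_comm[of A "- A"] by (simp add: dEexp mm_neg_left mm_neg_right)
  have \<Omega>: "\<Omega> a = dE ** dexp A (Y a)" for a
    by (simp add: \<Omega>_def Omega_def pderiv_lincomb dE_def E_def A_def)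
  have e1: "(\<chi> i. v0 $ Inl i) = \<phi>s" "(\<chi> i. v0 $ Inr i) = \<phi>s"
    by (simp_all add: v0_def vec_eq_iff)
  have e2: "(\<chi> i. (v0 + t *\<^sub>R axis (Inl a) 1) $ Inl i) = \<phi>s + t *\<^sub>R axis a 1"
      "(\<chi> i. (v0 + t *\<^sub>R axis (Inl a) 1) $ Inr i) = \<phi>s"
      "(\<chi> i. (v0 + t *\<^sub>R axis (Inr a) 1) $ Inl i) = \<phi>s"
      "(\<chi> i. (v0 + t *\<^sub>R axis (Inr a) 1) $ Inr i) = \<phi>s + t *\<^sub>R axis a 1" for t a
    by (simp_all add: v0_def vec_eq_iff axis_def)
  have V0: "V v0 = E ** E" by (simp add: V_def e1 E_def A_def)
  have pl: "pderiv_param V v0 (Inl a) = dexp A (Y a) ** E" for a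
    unfolding pderiv_param_def V_def e2 lincomb_axis
    by (rule vector_derivative_at) (simp add: has_vd_right E_def A_def)
  have pr: "pderiv_param V v0 (Inr a) = E ** dexp A (Y a)" for a
    unfolding pderiv_param_def V_def e2 lincomb_axis
    by (rule vector_derivative_at) (simp add: has_vd_left E_def A_def)
  have OL: "Omega V v0 (Inl a) = dE ** dexp A (dE ** Y a ** E)" for a
  proof -
    have "Omega V v0 (Inl a) = dE ** (dE ** dexp A (Y a) ** E)"
      by (simp add: Omega_def V0 pl dagger_mult dE_def matrix_mul_assoc)
    also have "\<dots> = dE ** dexp A (dE ** Y a ** E)" by (simp add: dexp_conj[OF cdE cE])
    finally show ?thesis .
  qed
  have OR: "Omega V v0 (Inr a) = \<Omega> a" for a
  proof -
    have "Omega V v0 (Inr a) = dE ** (dE ** E) ** dexp A (Y a)"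
      by (simp add: Omega_def V0 pr dagger_mult dE_def matrix_mul_assoc)
    then show ?thesis by (simp add: dEE \<Omega>)
  qed
  define L where "L = (\<lambda>Z. dE ** dexp A Z)"
  have linL: "linear L"
    unfolding L_def using linear_compose[OF dexp_linear bounded_linear.linear[OF bl_left]]
    by (simp add: o_def)
  have spanL: "L ` su = span (range \<Omega>)"
  proof -
    have "range \<Omega> = L ` range Y" by (auto simp: L_def \<Omega>)
    then show ?thesis using span_linear_image[OF linL, of "range Y"] span by simp
  qed
  have conj_su: "dE ** Z ** E \<in> su" if "Z \<in> su" for Z
  proof -
    have dZ: "dagger Z = - Z" "mtrace Z = 0" using that by (auto simp: su_def)
    have "dagger (dE ** Z ** E) = - (dE ** Z ** E)"
      by (simp add: dagger_mult dE_def dZ mm_neg_left mm_neg_right matrix_mul_assoc)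
    moreover have "mtrace (dE ** Z ** E) = 0"
      using mtrace_comm[of "dE ** Z" E] by (simp add: matrix_mul_assoc EdE dZ)
    ultimately show ?thesis by (simp add: su_def)
  qed
  have sub1: "range (Omega V v0) \<subseteq> span (range \<Omega>)"
  proof
    fix W assume "W \<in> range (Omega V v0)"
    then obtain i where W: "W = Omega V v0 i" by auto
    show "W \<in> span (range \<Omega>)"
    proof (cases i)
      case (Inl a)
      have "dE ** Y a ** E \<in> su" using conj_su[of "Y a"] span span_base[of "Y a" "range Y"] by auto
      then have "L (dE ** Y a ** E) \<in> span (range \<Omega>)" using spanL by blast
      then show ?thesis using W Inl OL by (simp add: L_def)
    next
      case (Inr a)
      then show ?thesis using W OR by (simp add: span_base)
    qed
  qed
  have sub2: "range \<Omega> \<subseteq> range (Omega V v0)"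
  proof
    fix W assume "W \<in> range \<Omega>"
    then obtain a where "W = \<Omega> a" by auto
    then have "W = Omega V v0 (Inr a)" using OR by simp
    then show "W \<in> range (Omega V v0)" by blast
  qed
  have "span (range (Omega V v0)) = span (range \<Omega>)"
  proof
    show "span (range (Omega V v0)) \<subseteq> span (range \<Omega>)"
      using sub1 by (simp add: span_minimal)
    show "span (range \<Omega>) \<subseteq> span (range (Omega V v0))"
      using sub2 by (rule span_mono)
  qed
  then show ?thesis
    using sing unfolding singular_point_def by (simp add: V_def v0_def \<Omega>_def)
qed


definition diagm :: "('n \<Rightarrow> complex) \<Rightarrow> complex^'n^'n" where
  "diagm a = (\<chi> i j. if i = j then a i else 0)"

lemma mm_diag_right: "(Y ** diagm b) $ i $ j = Y $ i $ j * b j"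
  unfolding matrix_matrix_mult_def diagm_def
  by (simp add: if_distrib if_distribR cong: if_cong)

lemma mm_diag_left: "(diagm b ** Y) $ i $ j = b i * Y $ i $ j"
  unfolding matrix_matrix_mult_def diagm_def
  by (simp add: if_distrib if_distribR cong: if_cong)

lemma matpow_diag: "matpow (diagm a) k = diagm (\<lambda>i. a i ^ k)"
proof (induction k)
  case 0
  then show ?case by (simp add: diagm_def mat_def)
next
  case (Suc k)
  then show ?case by (simp add: vec_eq_iff mm_diag_left) (simp add: diagm_def)
qed

lemma entry_bl: "bounded_linear (\<lambda>M::complex^'n^'n. M $ i $ j)"
  using bounded_linear_compose[OF bounded_linear_vec_nth[of j] bounded_linear_vec_nth[of i]]
  by (simp add: o_def)

lemma mexp_diag_off:
  assumes "i \<noteq> j" shows "mexp (diagm a) $ i $ j = 0"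
proof -
  have "mexp (diagm a) $ i $ j = (\<Sum>k. ((1 / fact k :: real) *\<^sub>R matpow (diagm a) k) $ i $ j)"
    unfolding mexp_def by (rule bounded_linear.suminf[OF entry_bl summable_mexp_series])
  also have "\<dots> = (\<Sum>k::nat. 0)"
    by (rule arg_cong[where f = suminf], rule ext) (simp only: matpow_diag, simp add: diagm_def assms)
  finally show ?thesis by simp
qed

lemma dpow_diag: "(a p - a q) * dpow (diagm a) Y k $ p $ q = Y $ p $ q * (a p ^ k - a q ^ k)"
proof (induction k)
  case (Suc k)
  have "(a p - a q) * dpow (diagm a) Y (Suc k) $ p $ q
      = (a p - a q) * (Y $ p $ q * a q ^ k) + a p * ((a p - a q) * dpow (diagm a) Y k $ p $ q)"
    by (simp add: matpow_diag mm_diag_right mm_diag_left algebra_simps)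
  also have "\<dots> = Y $ p $ q * (a p ^ Suc k - a q ^ Suc k)"
    by (simp only: Suc) (simp add: algebra_simps)
  finally show ?case .
qed simp

lemma dexp_diag: "(a p - a q) * dexp (diagm a) Y $ p $ q = Y $ p $ q * (exp (a p) - exp (a q))"
proof -
  have s1: "summable (\<lambda>k. (1 / fact k :: real) *\<^sub>R (dpow (diagm a) Y k $ p $ q))"
    using bounded_linear.summable[OF entry_bl summable_dexp_series] by simp
  have "(a p - a q) * dexp (diagm a) Y $ p $ q
     = (a p - a q) * (\<Sum>k. (1 / fact k :: real) *\<^sub>R (dpow (diagm a) Y k $ p $ q))"
    unfolding dexp_def by (simp add: bounded_linear.suminf[OF entry_bl summable_dexp_series])
  also have "\<dots> = (\<Sum>k. (a p - a q) * ((1 / fact k :: real) *\<^sub>R (dpow (diagm a) Y k $ p $ q)))"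
    by (rule suminf_mult[OF s1, symmetric])
  also have "\<dots> = (\<Sum>k. Y $ p $ q * (a p ^ k /\<^sub>R fact k - a q ^ k /\<^sub>R fact k))"
  proof (rule arg_cong[where f = suminf], rule ext)
    fix k
    have "(a p - a q) * ((1 / fact k :: real) *\<^sub>R (dpow (diagm a) Y k $ p $ q))
        = (1 / fact k :: real) *\<^sub>R ((a p - a q) * dpow (diagm a) Y k $ p $ q)"
      by (rule mult_scaleR_right)
    also have "\<dots> = Y $ p $ q * (a p ^ k /\<^sub>R fact k - a q ^ k /\<^sub>R fact k)"
      by (simp only: dpow_diag) (simp add: scaleR_conv_of_real algebra_simps divide_inverse)
    finally show "(a p - a q) * ((1 / fact k :: real) *\<^sub>R (dpow (diagm a) Y k $ p $ q))
        = Y $ p $ q * (a p ^ k /\<^sub>R fact k - a q ^ k /\<^sub>R fact k)" .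
  qed
  also have "\<dots> = Y $ p $ q * (\<Sum>k. a p ^ k /\<^sub>R fact k - a q ^ k /\<^sub>R fact k)"
    by (rule suminf_mult) (intro summable_diff summable_exp_generic)
  also have "\<dots> = Y $ p $ q * (exp (a p) - exp (a q))"
    by (simp add: exp_def suminf_diff[OF summable_exp_generic summable_exp_generic])
  finally show ?thesis .
qed


lemma part_a:
  fixes X :: "'m::finite \<Rightarrow> complex^'n::finite^'n"
  assumes card: "CARD('n) \<ge> 2" and span: "span (range X) = su"
  shows "\<exists>\<theta>. singular_point (\<lambda>\<theta>. mexp (lincomb X \<theta>)) \<theta>"
proof -
  have "\<not> card (UNIV::'n set) \<le> Suc 0" using card by simp
  then obtain p q :: 'n where pq: "p \<noteq> q"
    using card_le_Suc0_iff_eq[of "UNIV::'n set"] by auto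
  define a where "a = (\<lambda>i. (if i = p then \<i> * of_real pi else 0) + (if i = q then - (\<i> * of_real pi) else 0))"
  have ap: "a p = \<i> * of_real pi" and aq: "a q = - (\<i> * of_real pi)" using pq by (auto simp: a_def)
  define A where "A = diagm a"
  have "dagger A = - A"
    by (auto simp: A_def dagger_def diagm_def vec_eq_iff a_def)
  moreover have "mtrace A = 0"
    by (simp add: A_def mtrace_def diagm_def a_def sum.distrib)
  ultimately have Asu: "A \<in> su" by (simp add: su_def)
  then obtain \<theta> where th: "lincomb X \<theta> = A" using span span_sub_lincomb[of X] by blast
  define E where "E = mexp A"
  have D0: "dexp A (X j) $ p $ q = 0" for j
  proof -
    have "(a p - a q) * dexp A (X j) $ p $ q = X j $ p $ q * (exp (a p) - exp (a q))"
      unfolding A_def by (rule dexp_diag)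
    also have "\<dots> = 0" by (simp add: ap aq exp_minus)
    finally show ?thesis by (simp add: ap aq)
  qed
  have O0: "Omega (\<lambda>\<theta>. mexp (lincomb X \<theta>)) \<theta> j $ p $ q = 0" for j
  proof -
    have "Omega (\<lambda>\<theta>. mexp (lincomb X \<theta>)) \<theta> j = dagger E ** dexp A (X j)"
      by (simp add: Omega_def pderiv_lincomb th E_def)
    also have "\<dots> $ p $ q = 0"
      unfolding matrix_matrix_mult_def dagger_def
    proof (simp, rule sum.neutral, rule ballI)
      fix k assume "k \<in> (UNIV::'n set)"
      show "cnj (E $ k $ p) * dexp A (X j) $ k $ q = 0"
      proof (cases "k = p")
        case True then show ?thesis by (simp add: D0)
      next
        case False then show ?thesis by (simp add: E_def A_def mexp_diag_off)
      qed
    qed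
    finally show ?thesis .
  qed
  define Z where "Z = (\<chi> i j. if i = p \<and> j = q then 1 else if i = q \<and> j = p then -1 else (0::complex))"
  have "dagger Z = - Z" using pq by (auto simp: Z_def dagger_def vec_eq_iff)
  moreover have "mtrace Z = 0" using pq by (simp add: Z_def mtrace_def, intro sum.neutral) auto
  ultimately have Zsu: "Z \<in> su" by (simp add: su_def)
  have Zpq: "Z $ p $ q = 1" using pq by (simp add: Z_def)
  have sub: "subspace {M::complex^'n^'n. M $ p $ q = 0}"
    by (simp add: subspace_def)
  have "span (range (Omega (\<lambda>\<theta>. mexp (lincomb X \<theta>)) \<theta>)) \<subseteq> {M. M $ p $ q = 0}"
    by (rule span_minimal[OF _ sub]) (auto simp: O0)
  then have "Z \<notin> span (range (Omega (\<lambda>\<theta>. mexp (lincomb X \<theta>)) \<theta>))" using Zpq by auto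
  then have "singular_point (\<lambda>\<theta>. mexp (lincomb X \<theta>)) \<theta>"
    unfolding singular_point_def using Zsu by blast
  then show ?thesis by blast
qed



theorem lemma3:
  fixes X :: "'m::finite \<Rightarrow> complex^'n::finite^'n"
    and Y :: "'k::finite \<Rightarrow> complex^'n^'n"
  assumes "CARD('n) \<ge> 2"
  shows
   "((\<forall>j. X j \<in> su) \<and> span (range X) = su \<and> CARD('m) > CARD('n)^2 - 1
       \<longrightarrow> \<not> locally_surjective (\<lambda>\<theta>. mexp (lincomb X \<theta>))
           \<and> (\<exists>\<theta>. singular_point (\<lambda>\<theta>. mexp (lincomb X \<theta>)) \<theta>))
    \<and>
    ((\<forall>j. Y j \<in> su) \<and> inj Y \<and> independent (range Y) \<and> span (range Y) = su
       \<longrightarrow> (\<forall>\<phi>s. singular_point (\<lambda>\<phi>. mexp (lincomb Y \<phi>)) \<phi>s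
            \<longrightarrow> singular_point
                  (\<lambda>v::real^('k + 'k). mexp (lincomb Y (\<chi> i. v $ Inl i))
                                        ** mexp (lincomb Y (\<chi> i. v $ Inr i)))
                  (\<chi> i. case i of Inl a \<Rightarrow> \<phi>s $ a | Inr a \<Rightarrow> \<phi>s $ a)))"
proof (intro conjI impI allI)
  assume H: "(\<forall>j. X j \<in> su) \<and> span (range X) = su \<and> CARD('m) > CARD('n)^2 - 1"
  obtain \<theta> where "singular_point (\<lambda>\<theta>. mexp (lincomb X \<theta>)) \<theta>"
    using part_a[OF assms] H by blast
  then show "\<not> locally_surjective (\<lambda>\<theta>. mexp (lincomb X \<theta>))"
    and "\<exists>\<theta>. singular_point (\<lambda>\<theta>. mexp (lincomb X \<theta>)) \<theta>"
    unfolding locally_surjective_def by blast+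
next
  fix \<phi>s
  assume "(\<forall>j. Y j \<in> su) \<and> inj Y \<and> independent (range Y) \<and> span (range Y) = su"
    and "singular_point (\<lambda>\<phi>. mexp (lincomb Y \<phi>)) \<phi>s"
  then show "singular_point
                  (\<lambda>v::real^('k + 'k). mexp (lincomb Y (\<chi> i. v $ Inl i))
                                        ** mexp (lincomb Y (\<chi> i. v $ Inr i)))
                  (\<chi> i. case i of Inl a \<Rightarrow> \<phi>s $ a | Inr a \<Rightarrow> \<phi>s $ a)"
    using part_b by blast
qed

end
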